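(* Let $A,B,C$ be an LR triple on $V$ and let $\mathcal I$ be the set of idempotent centralizers for $A,B,C$ (a subalgebra of $\mathrm{End}(V)$). (i) If $A,B,C$ is trivial (i.e. $d=0$), then $I$ is a basis of $\mathcal I$. (ii) If $A,B,C$ is nonbipartite, then $I$ is a basis of $\mathcal I$. (iii) If $A,B,C$ is bipartite and nontrivial (so $d$ is even), then $I,J$ is a basis of $\mathcal I$, where $J=\sum_{j=0}^{d/2}E_{2j}$.
   Context: Let $V$ be a vector space over a field $\mathbb F$ with $\dim V=d+1$. A decomposition of $V$ is a sequence $(V_i)_{i=0}^d$ of one-dimensional subspaces with $V=\bigoplus V_i$; $X$ lowers it if $XV_i=V_{i-1}$ ($1\le i\le d$), $XV_0=0$; raises it if $XV_i=V_{i+1}$ ($0\le i\le d-1$), $XV_d=0$. An ordered pair $X,Y$ is an LR pair if some decomposition (unique, the $(X,Y)$-decomposition) is lowered by $X$ and raised by $Y$. An LR triple is $A,B,C\in\mathrm{End}(V)$ with $A,B$; $B,C$; $C,A$ LR pairs; it is trivial if $d=0$. Let $E_i,E'_i,E''_i$ ($0\le i\le d$) be the projections onto the $i$-th components of the $(A,B)$-, $(B,C)$-, $(C,A)$-decompositions. The triple is bipartite if $\mathrm{tr}(CE_i)=\mathrm{tr}(AE'_i)=\mathrm{tr}(BE''_i)=0$ for all $i$, nonbipartite otherwise. An idempotent centralizer for $A,B,C$ is an element of $\mathrm{End}(V)$ commuting with every $E_i,E'_i,E''_i$ ($0\le i\le d$). *)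

theory Defs
  imports "HOL-Analysis.Analysis"
begin

text \<open>V is modelled as the coordinate space 'a^'n over a field 'a, so dim V = CARD('n) = d+1;
  End(V) is modelled as the matrices 'a^'n^'n acting by matrix-vector multiplication.\<close>

definition decomposition :: "('a::field ^ 'n::finite) set list \<Rightarrow> bool" where
  "decomposition Vs \<longleftrightarrow>
     length Vs = CARD('n) \<and>
     (\<forall>i < length Vs. vec.subspace (Vs ! i) \<and> vec.dim (Vs ! i) = 1) \<and>
     (\<forall>v :: 'a ^ 'n. \<exists>!us. (\<forall>i. (i < length Vs \<longrightarrow> us i \<in> Vs ! i) \<and> (i \<ge> length Vs \<longrightarrow> us i = 0))
                       \<and> v = (\<Sum>i<length Vs. us i))"

definition lowers :: "'a::field ^ 'n ^ 'n \<Rightarrow> ('a ^ 'n) set list \<Rightarrow> bool" where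
  "lowers X Vs \<longleftrightarrow>
     (\<forall>i. 1 \<le> i \<and> i < length Vs \<longrightarrow> (\<lambda>v. X *v v) ` (Vs ! i) = Vs ! (i - 1)) \<and>
     (\<lambda>v. X *v v) ` (Vs ! 0) = {0}"

definition raises :: "'a::field ^ 'n ^ 'n \<Rightarrow> ('a ^ 'n) set list \<Rightarrow> bool" where
  "raises X Vs \<longleftrightarrow>
     (\<forall>i. i + 1 < length Vs \<longrightarrow> (\<lambda>v. X *v v) ` (Vs ! i) = Vs ! (i + 1)) \<and>
     (\<lambda>v. X *v v) ` (Vs ! (length Vs - 1)) = {0}"

definition LR_pair :: "'a::field ^ 'n::finite ^ 'n \<Rightarrow> 'a ^ 'n ^ 'n \<Rightarrow> bool" where
  "LR_pair X Y \<longleftrightarrow> (\<exists>Vs. decomposition Vs \<and> lowers X Vs \<and> raises Y Vs)"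

text \<open>The (X,Y)-decomposition (unique when X,Y is an LR pair).\<close>
definition LR_decomp :: "'a::field ^ 'n::finite ^ 'n \<Rightarrow> 'a ^ 'n ^ 'n \<Rightarrow> ('a ^ 'n) set list" where
  "LR_decomp X Y = (THE Vs. decomposition Vs \<and> lowers X Vs \<and> raises Y Vs)"

definition proj :: "('a::field ^ 'n::finite) set list \<Rightarrow> nat \<Rightarrow> 'a ^ 'n ^ 'n" where
  "proj Vs i = (THE E. (\<forall>u \<in> Vs ! i. E *v u = u) \<and>
                       (\<forall>j < length Vs. j \<noteq> i \<longrightarrow> (\<forall>u \<in> Vs ! j. E *v u = 0)))"

definition LR_triple :: "'a::field ^ 'n::finite ^ 'n \<Rightarrow> 'a ^ 'n ^ 'n \<Rightarrow> 'a ^ 'n ^ 'n \<Rightarrow> bool" where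
  "LR_triple A B C \<longleftrightarrow> LR_pair A B \<and> LR_pair B C \<and> LR_pair C A"

definition bipartite :: "'a::field ^ 'n::finite ^ 'n \<Rightarrow> 'a ^ 'n ^ 'n \<Rightarrow> 'a ^ 'n ^ 'n \<Rightarrow> bool" where
  "bipartite A B C \<longleftrightarrow>
     (\<forall>i \<le> CARD('n) - 1.
        trace (C ** proj (LR_decomp A B) i) = 0 \<and>
        trace (A ** proj (LR_decomp B C) i) = 0 \<and>
        trace (B ** proj (LR_decomp C A) i) = 0)"

definition idem_centralizers :: "'a::field ^ 'n::finite ^ 'n \<Rightarrow> 'a ^ 'n ^ 'n \<Rightarrow> 'a ^ 'n ^ 'n \<Rightarrow> ('a ^ 'n ^ 'n) set" where
  "idem_centralizers A B C =
     {X. \<forall>i \<le> CARD('n) - 1.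
           X ** proj (LR_decomp A B) i = proj (LR_decomp A B) i ** X \<and>
           X ** proj (LR_decomp B C) i = proj (LR_decomp B C) i ** X \<and>
           X ** proj (LR_decomp C A) i = proj (LR_decomp C A) i ** X}"

definition mscale :: "'a::field \<Rightarrow> 'a ^ 'n ^ 'm \<Rightarrow> 'a ^ 'n ^ 'm" where
  "mscale c M = (\<chi> i j. c * M $ i $ j)"

definition is_basis_of :: "('a::field ^ 'n ^ 'm) list \<Rightarrow> ('a ^ 'n ^ 'm) set \<Rightarrow> bool" where
  "is_basis_of Ms S \<longleftrightarrow>
     S = {M. \<exists>c. M = (\<Sum>k<length Ms. mscale (c k) (Ms ! k))} \<and>
     (\<forall>c. (\<Sum>k<length Ms. mscale (c k) (Ms ! k)) = 0 \<longrightarrow> (\<forall>k<length Ms. c k = 0))"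

end

theory Submission
  imports Defs
begin

lemma mv_axis: "(M *v axis j 1) $ i = (M::'a::field^'n^'m) $ i $ j"
  by (simp add: matrix_vector_mult_def axis_def if_distrib cong: if_cong)

lemma matrix_add_rdistrib': "((B + C) ** (A::'a::field^'n^'n)) = (B ** A) + (C ** A)"
  by (vector matrix_matrix_mult_def sum.distrib[symmetric] field_simps)

lemma matrix_diff_rdistrib': "((B - C) ** (A::'a::field^'n^'n)) = (B ** A) - (C ** A)"
  by (vector matrix_matrix_mult_def sum_subtractf[symmetric] field_simps)

lemma matrix_diff_ldistrib': "((A::'a::field^'n^'n) ** (B - C)) = (A ** B) - (A ** C)"
  by (vector matrix_matrix_mult_def sum_subtractf[symmetric] field_simps)

lemma one_dim:
  fixes S :: "('a::field ^ 'n::finite) set"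
  assumes "vec.subspace S" "vec.dim S = 1"
  obtains g where "g \<noteq> 0" "S = range (\<lambda>c. c *s g)"
proof -
  obtain Bs where Bs: "Bs \<subseteq> S" "vec.independent Bs" "S \<subseteq> vec.span Bs" "card Bs = vec.dim S"
    by (rule vec.basis_exists)
  then obtain g where g: "Bs = {g}" using assms(2) by (metis card_1_singletonE)
  have "g \<noteq> 0" using Bs(2) g vec.dependent_zero by blast
  moreover have "S = vec.span {g}"
    using Bs g assms(1) vec.span_subspace by blast
  ultimately show ?thesis using that vec.span_singleton by blast
qed

locale decomp =
  fixes Vs :: "('a::field ^ 'n::finite) set list"
  assumes dec: "decomposition Vs"
begin



lemma len: "length Vs = CARD('n)" using dec by (simp add: decomposition_def)
lemma sub: "i < CARD('n) \<Longrightarrow> vec.subspace (Vs!i)" using dec by (simp add: decomposition_def)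
lemma dim1: "i < CARD('n) \<Longrightarrow> vec.dim (Vs!i) = 1" using dec by (simp add: decomposition_def)
lemma zero_in: "i < CARD('n) \<Longrightarrow> 0 \<in> Vs!i" using sub vec.subspace_0 by blast
lemma add_in: "i < CARD('n) \<Longrightarrow> x \<in> Vs!i \<Longrightarrow> y \<in> Vs!i \<Longrightarrow> x + y \<in> Vs!i"
  using sub vec.subspace_add by blast
lemma scale_in: "i < CARD('n) \<Longrightarrow> x \<in> Vs!i \<Longrightarrow> c *s x \<in> Vs!i"
  using sub vec.subspace_scale by blast

lemma gen: assumes "i < CARD('n)" obtains g where "g \<noteq> 0" "Vs!i = range (\<lambda>c. c *s g)"
  using one_dim[OF sub[OF assms] dim1[OF assms]] by blast

lemma nonzero_ex: "i < CARD('n) \<Longrightarrow> \<exists>g\<in>Vs!i. g \<noteq> 0"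
  by (metis gen rangeI vector_smult_lid)

lemma span1: assumes "i < CARD('n)" "g \<in> Vs!i" "g \<noteq> 0" "u \<in> Vs!i" shows "\<exists>c. u = c *s g"
proof -
  obtain h where h: "h \<noteq> 0" "Vs!i = range (\<lambda>c. c *s h)" using gen assms(1) by blast
  obtain a where a: "g = a *s h" using h assms(2) by auto
  obtain b where b: "u = b *s h" using h assms(4) by auto
  have "a \<noteq> 0" using a assms(3) by auto
  then have "u = (b / a) *s g" using a b by (simp add: vector_smult_assoc)
  then show ?thesis by blast
qed

lemma ex1: "\<exists>!us. (\<forall>i. (i < CARD('n) \<longrightarrow> us i \<in> Vs ! i) \<and> (i \<ge> CARD('n) \<longrightarrow> us i = 0)) \<and> v = (\<Sum>i<CARD('n). us i)"
  using dec unfolding decomposition_def len[symmetric] by blast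

definition comp :: "'a^'n \<Rightarrow> nat \<Rightarrow> 'a^'n" where
  "comp v = (THE us. (\<forall>i. (i < CARD('n) \<longrightarrow> us i \<in> Vs ! i) \<and> (i \<ge> CARD('n) \<longrightarrow> us i = 0)) \<and> v = (\<Sum>i<CARD('n). us i))"

lemma comp_prop: "(\<forall>i. (i < CARD('n) \<longrightarrow> comp v i \<in> Vs ! i) \<and> (i \<ge> CARD('n) \<longrightarrow> comp v i = 0)) \<and> v = (\<Sum>i<CARD('n). comp v i)"
  unfolding comp_def by (rule theI'[OF ex1])

lemma comp_in: "i < CARD('n) \<Longrightarrow> comp v i \<in> Vs!i" using comp_prop by blast
lemma comp_sum: "v = (\<Sum>i<CARD('n). comp v i)" using comp_prop by blast

lemma comp_unique:
  assumes "\<forall>i<CARD('n). us i \<in> Vs!i" "v = (\<Sum>i<CARD('n). us i)" "i < CARD('n)"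
  shows "comp v i = us i"
proof -
  let ?w = "\<lambda>i. if i < CARD('n) then us i else 0"
  have "(\<forall>i. (i < CARD('n) \<longrightarrow> ?w i \<in> Vs ! i) \<and> (i \<ge> CARD('n) \<longrightarrow> ?w i = 0)) \<and> v = (\<Sum>i<CARD('n). ?w i)"
    using assms by auto
  then have "comp v = ?w" unfolding comp_def using ex1 by (rule the1_equality[rotated])
  then show ?thesis using assms by simp
qed

lemma comp_add: "i < CARD('n) \<Longrightarrow> comp (u + w) i = comp u i + comp w i"
  by (rule comp_unique) (auto simp: add_in comp_in sum.distrib comp_sum[symmetric])

lemma comp_scale: "i < CARD('n) \<Longrightarrow> comp (c *s u) i = c *s comp u i"
proof (rule comp_unique)
  show "\<forall>i<CARD('n). c *s comp u i \<in> Vs ! i" by (simp add: scale_in comp_in)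
  have "c *s u = c *s (\<Sum>i<CARD('n). comp u i)" using comp_sum by metis
  also have "\<dots> = (\<Sum>i<CARD('n). c *s comp u i)" by (rule vec.scale_sum_right)
  finally show "c *s u = (\<Sum>i<CARD('n). c *s comp u i)" .
qed

lemma comp_lin: "i < CARD('n) \<Longrightarrow> Vector_Spaces.linear (*s) (*s) (\<lambda>v. comp v i)"
  by unfold_locales (auto simp: comp_add comp_scale)

lemma comp_on: assumes "j < CARD('n)" "u \<in> Vs!j" "i < CARD('n)" shows "comp u i = (if i = j then u else 0)"
  by (rule comp_unique) (use assms in \<open>auto simp: zero_in if_distrib sum.delta\<close>)

definition E :: "nat \<Rightarrow> 'a^'n^'n" where "E i = proj Vs i"

lemma ext_matrix:
  assumes "\<And>i u. i < CARD('n) \<Longrightarrow> u \<in> Vs!i \<Longrightarrow> M *v u = M' *v u"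
  shows "M = M'"
proof -
  have "M *v v = M' *v v" for v
  proof -
    have "M *v v = (\<Sum>i<CARD('n). M *v comp v i)" by (subst comp_sum[of v]) (rule vec.sum)
    also have "\<dots> = (\<Sum>i<CARD('n). M' *v comp v i)" using assms comp_in by auto
    also have "\<dots> = M' *v v" by (subst (2) comp_sum[of v]) (rule vec.sum[symmetric])
    finally show ?thesis .
  qed
  then show ?thesis by (simp add: matrix_eq)
qed

lemma E_eq: assumes "i < CARD('n)" shows "E i = matrix (\<lambda>v. comp v i)"
proof -
  let ?M = "matrix (\<lambda>v. comp v i) :: 'a^'n^'n"
  have Mw: "?M *v v = comp v i" for v by (rule matrix_works[OF comp_lin[OF assms]])
  let ?P = "\<lambda>E::'a^'n^'n. (\<forall>u \<in> Vs ! i. E *v u = u) \<and>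
                       (\<forall>j < length Vs. j \<noteq> i \<longrightarrow> (\<forall>u \<in> Vs ! j. E *v u = 0))"
  have P: "?P ?M" using assms by (auto simp: Mw comp_on len)
  show ?thesis unfolding E_def proj_def
  proof (rule the_equality)
    show "?P ?M" by (rule P)
  next
    fix E' assume EP: "?P E'"
    show "E' = ?M"
    proof (rule ext_matrix)
      fix j u assume j: "j < CARD('n)" "u \<in> Vs!j"
      show "E' *v u = ?M *v u"
      proof (cases "j = i")
        case True then show ?thesis using EP P j by auto
      next
        case False then show ?thesis using EP P j by (auto simp: len)
      qed
    qed
  qed
qed

lemma E_apply: "i < CARD('n) \<Longrightarrow> E i *v v = comp v i"
  by (simp add: E_eq matrix_works[OF comp_lin])

lemma E_in: "i < CARD('n) \<Longrightarrow> E i *v v \<in> Vs!i" by (simp add: E_apply comp_in)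
lemma E_sum: "v = (\<Sum>i<CARD('n). E i *v v)"
proof -
  have "(\<Sum>i<CARD('n). E i *v v) = (\<Sum>i<CARD('n). comp v i)"
    by (rule sum.cong) (auto simp: E_apply)
  then show ?thesis using comp_sum[of v] by simp
qed
lemma E_on: "j < CARD('n) \<Longrightarrow> u \<in> Vs!j \<Longrightarrow> i < CARD('n) \<Longrightarrow> E i *v u = (if i = j then u else 0)"
  by (simp add: E_apply comp_on)
lemma E_id: "i < CARD('n) \<Longrightarrow> u \<in> Vs!i \<Longrightarrow> E i *v u = u" by (simp add: E_on)

lemma sum_single:
  fixes f :: "nat \<Rightarrow> 'a^'n"
  assumes "k < CARD('n)" "\<And>i. i < CARD('n) \<Longrightarrow> i \<noteq> k \<Longrightarrow> f i = 0"
  shows "(\<Sum>i<CARD('n). f i) = f k"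
proof -
  have "(\<Sum>i<CARD('n). f i) = (\<Sum>i\<in>{k}. f i)"
    by (rule sum.mono_neutral_right) (use assms in auto)
  then show ?thesis by simp
qed

lemma indicator:
  assumes "\<And>i u. i < CARD('n) \<Longrightarrow> u \<in> Vs!i \<Longrightarrow> P *v u = (if Q i then u else 0)" "j < CARD('n)"
  shows "P ** E j = (if Q j then E j else 0)" "E j ** P = (if Q j then E j else 0)"
proof -
  show "P ** E j = (if Q j then E j else 0)"
  proof (rule ext_matrix)
    fix i u assume iu: "i < CARD('n)" "u \<in> Vs!i"
    have "(P ** E j) *v u = P *v (E j *v u)" by (simp add: matrix_vector_mul_assoc)
    also have "\<dots> = (if j = i then P *v u else 0)" using E_on[OF iu assms(2)] by simp
    also have "\<dots> = (if Q j then E j else 0) *v u" using assms(1)[OF iu] E_on[OF iu assms(2)] by auto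
    finally show "(P ** E j) *v u = (if Q j then E j else 0) *v u" .
  qed
  show "E j ** P = (if Q j then E j else 0)"
  proof (rule ext_matrix)
    fix i u assume iu: "i < CARD('n)" "u \<in> Vs!i"
    have "(E j ** P) *v u = E j *v (P *v u)" by (simp add: matrix_vector_mul_assoc)
    also have "\<dots> = (if Q i then E j *v u else 0)" using assms(1)[OF iu] by simp
    also have "\<dots> = (if Q j then E j else 0) *v u" using E_on[OF iu assms(2)] by auto
    finally show "(E j ** P) *v u = (if Q j then E j else 0) *v u" .
  qed
qed

lemma scalar_ex:
  assumes "\<And>i. i < CARD('n) \<Longrightarrow> X ** E i = E i ** X" "i < CARD('n)"
  shows "\<exists>s. \<forall>u\<in>Vs!i. X *v u = s *s u"
proof -
  obtain g where g: "g \<noteq> 0" "Vs!i = range (\<lambda>c. c *s g)" using gen assms(2) by blast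
  have inv: "X *v u \<in> Vs!i" if "u \<in> Vs!i" for u
  proof -
    have "X *v u = X *v (E i *v u)" using E_id assms(2) that by simp
    also have "\<dots> = E i *v (X *v u)" by (simp add: matrix_vector_mul_assoc assms(1)[OF assms(2)])
    finally show ?thesis using E_in[OF assms(2), of "X *v u"] by simp
  qed
  have "g \<in> Vs!i" using g by (metis rangeI vector_smult_lid)
  then have "X *v g \<in> range (\<lambda>c. c *s g)" using inv g(2) by simp
  then obtain s where s: "X *v g = s *s g" by auto
  have "X *v u = s *s u" if u: "u \<in> Vs!i" for u
  proof -
    obtain c where c: "u = c *s g" using u g(2) by auto
    have "X *v u = c *s (X *v g)" using c by (simp add: vector_scalar_commute)
    also have "\<dots> = s *s u" using s c by (simp add: vector_smult_assoc mult.commute)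
    finally show ?thesis .
  qed
  then show ?thesis by blast
qed


lemma shift_odd:
  assumes Jind: "\<And>i u. i < CARD('n) \<Longrightarrow> u \<in> Vs!i \<Longrightarrow> P *v u = (if Q i then u else 0)"
    and sh: "\<And>i u. i < CARD('n) \<Longrightarrow> u \<in> Vs!i \<Longrightarrow>
              M *v u = 0 \<or> (\<exists>k<CARD('n). M *v u \<in> Vs!k \<and> (Q k \<longleftrightarrow> \<not> Q i))"
  shows "M ** P = (mat 1 - P) ** M"
proof (rule ext_matrix)
  fix i u assume iu: "i < CARD('n)" "u \<in> Vs!i"
  have l: "(M ** P) *v u = (if Q i then M *v u else 0)"
    by (simp add: matrix_vector_mul_assoc[symmetric] Jind[OF iu])
  have r: "((mat 1 - P) ** M) *v u = M *v u - P *v (M *v u)"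
    by (simp add: matrix_vector_mul_assoc[symmetric] matrix_vector_mult_diff_rdistrib)
  from sh[OF iu] show "(M ** P) *v u = ((mat 1 - P) ** M) *v u"
  proof
    assume "M *v u = 0" then show ?thesis using l r by simp
  next
    assume "\<exists>k<CARD('n). M *v u \<in> Vs!k \<and> (Q k \<longleftrightarrow> \<not> Q i)"
    then obtain k where k: "k < CARD('n)" "M *v u \<in> Vs!k" "Q k \<longleftrightarrow> \<not> Q i" by blast
    show ?thesis using l r Jind[OF k(1,2)] k(3) by auto
  qed
qed

lemma trace_E: assumes i: "i < CARD('n)" shows "trace (E i) = 1"
proof -
  obtain g where g: "g \<in> Vs!i" "g \<noteq> 0" using nonzero_ex[OF i] by blast
  obtain k where k: "g $ k \<noteq> 0" using g(2) by (metis vec_eq_iff zero_index)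
  have col: "E i $ t $ r = E i $ k $ r * g $ t / g $ k" for t r
  proof -
    obtain c where c: "E i *v axis r 1 = c *s g" using span1[OF i g(1) g(2) E_in[OF i]] by blast
    have "E i $ t $ r = c * g $ t" using arg_cong[OF c, of "\<lambda>x. x $ t"] by (simp add: mv_axis)
    moreover have "E i $ k $ r = c * g $ k" using arg_cong[OF c, of "\<lambda>x. x $ k"] by (simp add: mv_axis)
    ultimately show ?thesis using k by (simp add: field_simps)
  qed
  have "trace (E i) = (\<Sum>r\<in>UNIV. E i $ r $ r)" by (simp add: trace_def)
  also have "\<dots> = (\<Sum>r\<in>UNIV. E i $ k $ r * g $ r / g $ k)" by (rule sum.cong[OF refl]) (rule col)
  also have "\<dots> = (\<Sum>r\<in>UNIV. E i $ k $ r * g $ r) / g $ k" by (simp add: sum_divide_distrib)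
  also have "(\<Sum>r\<in>UNIV. E i $ k $ r * g $ r) = (E i *v g) $ k" by (simp add: matrix_vector_mult_def)
  also have "E i *v g = g" using E_id[OF i g(1)] .
  finally show ?thesis using k by simp
qed
end

locale LRp = decomp Vs for Vs :: "('a::field ^ 'n::finite) set list" +
  fixes X Y :: "'a^'n^'n"
  assumes low: "lowers X Vs" and rai: "raises Y Vs"
begin

lemma low_img: "1 \<le> i \<Longrightarrow> i < CARD('n) \<Longrightarrow> (\<lambda>v. X *v v) ` (Vs!i) = Vs!(i-1)"
  using low by (simp add: lowers_def len)
lemma low0: "u \<in> Vs!0 \<Longrightarrow> X *v u = 0"
  using low unfolding lowers_def by blast
lemma low_in: "1 \<le> i \<Longrightarrow> i < CARD('n) \<Longrightarrow> u \<in> Vs!i \<Longrightarrow> X *v u \<in> Vs!(i-1)"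
  using low_img by blast
lemma rai_img: "i + 1 < CARD('n) \<Longrightarrow> (\<lambda>v. Y *v v) ` (Vs!i) = Vs!(i+1)"
  using rai by (simp add: raises_def len)
lemma raiN: "u \<in> Vs!(CARD('n)-1) \<Longrightarrow> Y *v u = 0"
  using rai unfolding raises_def len by blast
lemma rai_in: "i + 1 < CARD('n) \<Longrightarrow> u \<in> Vs!i \<Longrightarrow> Y *v u \<in> Vs!(i+1)"
  using rai_img by blast

lemma inj_gen:
  assumes "i < CARD('n)" "k < CARD('n)" "(\<lambda>v. M *v v) ` (Vs!i) = Vs!k" "u \<in> Vs!i" "u \<noteq> 0"
  shows "M *v u \<noteq> 0"
proof
  assume Mu: "M *v u = 0"
  obtain g where g: "g \<noteq> 0" "Vs!i = range (\<lambda>c. c *s g)" using gen assms(1) by blast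
  obtain c where c: "u = c *s g" using assms(4) g(2) by auto
  have "c \<noteq> 0" using c assms(5) by auto
  have "M *v u = c *s (M *v g)" using c by (simp add: vector_scalar_commute)
  then have "M *v g = 0" using Mu \<open>c \<noteq> 0\<close> by (metis vector_mul_eq_0)
  then have "\<forall>w \<in> Vs!i. M *v w = 0" using g(2) by (auto simp: vector_scalar_commute)
  then have "Vs!k \<subseteq> {0}" using assms(3) by auto
  then show False using nonzero_ex[OF assms(2)] by auto
qed

lemma low_inj: "1 \<le> i \<Longrightarrow> i < CARD('n) \<Longrightarrow> u \<in> Vs!i \<Longrightarrow> u \<noteq> 0 \<Longrightarrow> X *v u \<noteq> 0"
  by (rule inj_gen[OF _ _ low_img]) auto
lemma rai_inj: "i + 1 < CARD('n) \<Longrightarrow> u \<in> Vs!i \<Longrightarrow> u \<noteq> 0 \<Longrightarrow> Y *v u \<noteq> 0"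
  by (rule inj_gen[OF _ _ rai_img]) auto

lemma X_sum: "E i *v (X *v u) = (\<Sum>j<CARD('n). E i *v (X *v (E j *v u)))"
proof -
  have "X *v u = (\<Sum>j<CARD('n). X *v (E j *v u))" by (subst E_sum[of u]) (rule vec.sum)
  then show ?thesis by (simp add: vec.sum)
qed

lemma Y_sum: "E i *v (Y *v u) = (\<Sum>j<CARD('n). E i *v (Y *v (E j *v u)))"
proof -
  have "Y *v u = (\<Sum>j<CARD('n). Y *v (E j *v u))" by (subst E_sum[of u]) (rule vec.sum)
  then show ?thesis by (simp add: vec.sum)
qed

lemma X_term: "i < CARD('n) \<Longrightarrow> j < CARD('n) \<Longrightarrow> E i *v (X *v (E j *v u)) = (if j = i + 1 then X *v (E j *v u) else 0)"
proof -
  assume ij: "i < CARD('n)" "j < CARD('n)"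
  show ?thesis
  proof (cases "j = 0")
    case True
    then have "E j *v u \<in> Vs!0" using E_in[OF ij(2)] by simp
    then show ?thesis using low0 True by simp
  next
    case False
    then have "X *v (E j *v u) \<in> Vs!(j-1)" using low_in[OF _ ij(2) E_in[OF ij(2)]] by simp
    then show ?thesis using E_on[of "j-1" _ i] ij False by auto
  qed
qed

lemma Y_term: "i < CARD('n) \<Longrightarrow> j < CARD('n) \<Longrightarrow> E i *v (Y *v (E j *v u)) = (if i = j + 1 then Y *v (E j *v u) else 0)"
proof -
  assume ij: "i < CARD('n)" "j < CARD('n)"
  show ?thesis
  proof (cases "j + 1 < CARD('n)")
    case False then have "j = CARD('n) - 1" using ij by auto
    then have "E j *v u \<in> Vs!(CARD('n)-1)" using E_in[OF ij(2)] by simp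
    then show ?thesis using raiN \<open>j = CARD('n) - 1\<close> ij by auto
  next
    case True
    then have "Y *v (E j *v u) \<in> Vs!(j+1)" using rai_in[OF _ E_in[OF ij(2)]] by simp
    then show ?thesis using E_on[of "j+1" _ i] ij True by auto
  qed
qed

lemma comm_low: assumes i: "i + 1 < CARD('n)" shows "E i *v (X *v u) = X *v (E (i+1) *v u)"
proof -
  have "E i *v (X *v u) = (\<Sum>j<CARD('n). E i *v (X *v (E j *v u)))" by (rule X_sum)
  also have "\<dots> = (\<Sum>j<CARD('n). if j = i+1 then X *v (E j *v u) else 0)"
    by (rule sum.cong) (use i in \<open>simp_all add: X_term\<close>)
  also have "\<dots> = X *v (E (i+1) *v u)" using i by (simp add: sum.delta)
  finally show ?thesis .
qed

lemma comm_lowN: "E (CARD('n)-1) *v (X *v u) = 0"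
proof -
  have "E (CARD('n)-1) *v (X *v u) = (\<Sum>j<CARD('n). E (CARD('n)-1) *v (X *v (E j *v u)))" by (rule X_sum)
  also have "\<dots> = (\<Sum>j<CARD('n). 0)"
    by (rule sum.cong) (simp_all add: X_term)
  finally show ?thesis by simp
qed

lemma comm_rai: assumes i: "i + 1 < CARD('n)" shows "E (i+1) *v (Y *v u) = Y *v (E i *v u)"
proof -
  have "E (i+1) *v (Y *v u) = (\<Sum>j<CARD('n). E (i+1) *v (Y *v (E j *v u)))" by (rule Y_sum)
  also have "\<dots> = (\<Sum>j<CARD('n). if j = i then Y *v (E j *v u) else 0)"
    by (rule sum.cong) (use i in \<open>simp_all add: Y_term\<close>)
  also have "\<dots> = Y *v (E i *v u)" using i by (simp add: sum.delta)
  finally show ?thesis .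
qed

lemma comm_rai0: "E 0 *v (Y *v u) = 0"
proof -
  have "E 0 *v (Y *v u) = (\<Sum>j<CARD('n). E 0 *v (Y *v (E j *v u)))" by (rule Y_sum)
  also have "\<dots> = (\<Sum>j<CARD('n). 0)"
    by (rule sum.cong) (simp_all add: Y_term)
  finally show ?thesis by simp
qed

lemma kerY: "Vs!(CARD('n)-1) = {u. Y *v u = 0}"
proof
  show "Vs!(CARD('n)-1) \<subseteq> {u. Y *v u = 0}" using raiN by auto
  show "{u. Y *v u = 0} \<subseteq> Vs!(CARD('n)-1)"
  proof
    fix u assume "u \<in> {u. Y *v u = 0}"
    then have Yu: "Y *v u = 0" by simp
    have z: "E i *v u = 0" if "i < CARD('n)" "i \<noteq> CARD('n) - 1" for i
    proof (rule ccontr)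
      assume "E i *v u \<noteq> 0"
      then have "Y *v (E i *v u) \<noteq> 0" using rai_inj[OF _ E_in] that by auto
      moreover have "Y *v (E i *v u) = E (i+1) *v (Y *v u)" using comm_rai that by auto
      ultimately show False using Yu by simp
    qed
    have "u = (\<Sum>i<CARD('n). E i *v u)" by (rule E_sum)
    also have "\<dots> = E (CARD('n)-1) *v u" by (rule sum_single) (use z in auto)
    finally show "u \<in> Vs!(CARD('n)-1)" using E_in[of "CARD('n)-1" u] by simp
  qed
qed

lemma kerX: "Vs!0 = {u. X *v u = 0}"
proof
  show "Vs!0 \<subseteq> {u. X *v u = 0}" using low0 by auto
  show "{u. X *v u = 0} \<subseteq> Vs!0"
  proof
    fix u assume "u \<in> {u. X *v u = 0}"
    then have Xu: "X *v u = 0" by simp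
    have z: "E i *v u = 0" if "i < CARD('n)" "i \<noteq> 0" for i
    proof (rule ccontr)
      assume "E i *v u \<noteq> 0"
      then have "X *v (E i *v u) \<noteq> 0" using low_inj[OF _ _ E_in] that by auto
      moreover have "X *v (E i *v u) = E (i-1) *v (X *v u)" using comm_low[of "i-1"] that by auto
      ultimately show False using Xu by simp
    qed
    have "u = (\<Sum>i<CARD('n). E i *v u)" by (rule E_sum)
    also have "\<dots> = E 0 *v u" by (rule sum_single) (use z in auto)
    finally show "u \<in> Vs!0" using E_in[of 0 u] by simp
  qed
qed

end

lemma LR_unique:
  fixes X Y :: "'a::field ^ 'n::finite ^ 'n"
  assumes "decomposition Vs" "lowers X Vs" "raises Y Vs"
    "decomposition Ws" "lowers X Ws" "raises Y Ws"
  shows "Vs = Ws"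
proof -
  interpret V: LRp Vs X Y using assms(1-3) by (simp add: LRp_def LRp_axioms_def decomp_def)
  interpret W: LRp Ws X Y using assms(4-6) by (simp add: LRp_def LRp_axioms_def decomp_def)
  have k: "Vs!(CARD('n)-1-k) = Ws!(CARD('n)-1-k)" if "k < CARD('n)" for k
    using that
  proof (induction k)
    case 0 then show ?case using V.kerY W.kerY by simp
  next
    case (Suc k)
    have i: "1 \<le> CARD('n)-1-k" "CARD('n)-1-k < CARD('n)" using Suc.prems by auto
    have e: "CARD('n)-1-k-1 = CARD('n)-1-Suc k" by simp
    show ?case using V.low_img[OF i] W.low_img[OF i] Suc by (simp add: e)
  qed
  show ?thesis
  proof (rule nth_equalityI)
    show "length Vs = length Ws" by (simp add: V.len W.len)
    fix i assume "i < length Vs"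
    then have "i < CARD('n)" by (simp add: V.len)
    then show "Vs!i = Ws!i" using k[of "CARD('n)-1-i"] by simp
  qed
qed

lemma LR_decomp_prop:
  fixes X Y :: "'a::field ^ 'n::finite ^ 'n"
  assumes "LR_pair X Y"
  shows "decomposition (LR_decomp X Y) \<and> lowers X (LR_decomp X Y) \<and> raises Y (LR_decomp X Y)"
proof -
  have "\<exists>!Vs. decomposition Vs \<and> lowers X Vs \<and> raises Y Vs"
    using assms LR_unique unfolding LR_pair_def by blast
  then show ?thesis unfolding LR_decomp_def by (rule theI')
qed

lemma LR_decomp_LRp: "LR_pair X Y \<Longrightarrow> LRp (LR_decomp X Y) X Y"
  using LR_decomp_prop by (simp add: LRp_def LRp_axioms_def decomp_def)


lemma sum_mv: "finite S \<Longrightarrow> (\<Sum>j\<in>S. M j) *v (u::'a::field^'n) = (\<Sum>j\<in>S. M j *v u)"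
  by (induction S rule: finite_induct) (auto simp: matrix_vector_mult_add_rdistrib)

lemma mscale_mv: "mscale c M *v u = c *s (M *v u)"
  by (simp add: mscale_def matrix_vector_mult_def vec_eq_iff sum_distrib_left mult.assoc)

lemma mscale_mat: "mscale c M = mat c ** (M::'a::field^'n^'n)"
  by (simp add: mscale_def matrix_matrix_mult_def mat_def vec_eq_iff if_distrib if_distribR sum.delta cong: if_cong)

lemma mat_comm: "mat c ** M = M ** (mat c :: 'a::field^'n^'n)"
  by (simp add: matrix_matrix_mult_def mat_def vec_eq_iff if_distrib if_distribR sum.delta mult.commute cong: if_cong)

lemma trace_odd:
  fixes M P F :: "'a::field^'n^'n"
  assumes MP: "M ** P = (mat 1 - P) ** M" and PF: "P ** F = F ** P" and c: "P ** F = F \<or> P ** F = 0"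
  shows "trace (M ** F) = 0"
  using c
proof
  assume F: "P ** F = F"
  have "trace (M ** F) = trace (M ** (P ** F))" using F by simp
  also have "\<dots> = trace (((mat 1 - P) ** M) ** F)" by (simp add: matrix_mul_assoc MP)
  also have "\<dots> = trace (M ** F) - trace (P ** (M ** F))"
    by (simp add: matrix_diff_rdistrib' trace_sub matrix_mul_assoc)
  also have "trace (P ** (M ** F)) = trace ((M ** F) ** P)" by (rule trace_mul_sym)
  also have "\<dots> = trace (M ** F)" by (simp add: matrix_mul_assoc[symmetric] PF[symmetric] F)
  finally show ?thesis by simp
next
  assume F: "P ** F = 0"
  have "M ** F - P ** (M ** F) = ((mat 1 - P) ** M) ** F"
    by (simp add: matrix_diff_rdistrib' matrix_mul_assoc)
  also have "\<dots> = M ** (P ** F)" by (simp add: MP[symmetric] matrix_mul_assoc)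
  also have "\<dots> = 0" using F by simp
  finally have e: "M ** F - P ** (M ** F) = 0" .
  have e2: "P ** (M ** F) = M ** F" using e by simp
  have "trace (M ** F) = trace (P ** (M ** F))" using e2 by simp
  also have "\<dots> = trace ((M ** F) ** P)" by (rule trace_mul_sym)
  also have "(M ** F) ** P = 0" by (simp add: matrix_mul_assoc[symmetric] PF[symmetric] F)
  finally show ?thesis by (simp add: trace_0[simplified])
qed

lemma comm_mscale:
  fixes X E :: "'a::field^'n^'n"
  assumes h: "X ** E = E ** X" shows "mscale c X ** E = E ** mscale c X"
proof -
  have "mscale c X ** E = mat c ** (X ** E)" by (simp add: mscale_mat matrix_mul_assoc)
  also have "\<dots> = mat c ** (E ** X)" using h by simp
  also have "\<dots> = (mat c ** E) ** X" by (simp only: matrix_mul_assoc)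
  also have "\<dots> = (E ** mat c) ** X" by (simp only: mat_comm)
  also have "\<dots> = E ** mscale c X" by (simp only: mscale_mat matrix_mul_assoc)
  finally show ?thesis .
qed

lemma comm_add:
  fixes X Y E :: "'a::field^'n^'n"
  assumes "X ** E = E ** X" "Y ** E = E ** Y" shows "(X + Y) ** E = E ** (X + Y)"
  using assms by (simp add: matrix_add_rdistrib' matrix_add_ldistrib)

lemma mscale_I_diag: "(mscale x (mat 1 :: 'a::field^'n^'n)) $ i $ i = x"
  by (simp add: mscale_def mat_def)
lemma mscale_I_zero: "mscale x (mat 1 :: 'a::field^'n^'n) = 0 \<Longrightarrow> x = 0"
  by (metis mscale_I_diag zero_index)

lemma basis1_lemma:
  assumes S: "S = range (\<lambda>c. mscale c (mat 1 :: 'a::field^'n^'n))"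
  shows "is_basis_of [mat 1] S"
proof -
  have e: "(\<Sum>k<length [mat 1::'a^'n^'n]. mscale (c k) ([mat 1] ! k)) = mscale (c 0) (mat 1)" for c :: "nat \<Rightarrow> 'a"
    by simp
  have S1: "S = {M. \<exists>c::nat\<Rightarrow>'a. M = mscale (c 0) (mat 1)}"
  proof
    show "S \<subseteq> {M. \<exists>c::nat\<Rightarrow>'a. M = mscale (c 0) (mat 1)}"
    proof
      fix M assume "M \<in> S"
      then obtain x where "M = mscale x (mat 1)" using S by blast
      then show "M \<in> {M. \<exists>c::nat\<Rightarrow>'a. M = mscale (c 0) (mat 1)}"
        by (intro CollectI exI[of _ "\<lambda>_::nat. x"]) simp
    qed
    show "{M. \<exists>c::nat\<Rightarrow>'a. M = mscale (c 0) (mat 1)} \<subseteq> S" using S by blast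
  qed
  have I: "\<forall>k<length [mat 1::'a^'n^'n]. c k = 0" if "mscale (c 0) (mat 1::'a^'n^'n) = 0" for c :: "nat \<Rightarrow> 'a"
    using mscale_I_zero[OF that] by simp
  show ?thesis unfolding is_basis_of_def e using S1 I by blast
qed

lemma basis2_lemma:
  fixes P :: "'a::field^'n^'n"
  assumes S: "S = {mscale c0 (mat 1) + mscale c1 P | c0 c1. True}"
    and ind: "\<And>c0 c1. mscale c0 (mat 1) + mscale c1 P = 0 \<Longrightarrow> c0 = 0 \<and> c1 = 0"
  shows "is_basis_of [mat 1, P] S"
proof -
  have s: "(\<Sum>k<length [mat 1, P]. mscale (c k) ([mat 1, P] ! k)) = mscale (c 0) (mat 1) + mscale (c 1) P" for c
    by (simp add: numeral_2_eq_2)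
  have S2: "S = {M. \<exists>c::nat\<Rightarrow>'a. M = mscale (c 0) (mat 1) + mscale (c 1) P}"
  proof
    show "S \<subseteq> {M. \<exists>c::nat\<Rightarrow>'a. M = mscale (c 0) (mat 1) + mscale (c 1) P}"
    proof
      fix M assume "M \<in> S"
      then obtain c0 c1 where M: "M = mscale c0 (mat 1) + mscale c1 P" using S by blast
      define c :: "nat \<Rightarrow> 'a" where "c = (\<lambda>k. if k = 0 then c0 else c1)"
      have "M = mscale (c 0) (mat 1) + mscale (c 1) P" using M by (simp add: c_def)
      then show "M \<in> {M. \<exists>c::nat\<Rightarrow>'a. M = mscale (c 0) (mat 1) + mscale (c 1) P}" by blast
    qed
    show "{M. \<exists>c::nat\<Rightarrow>'a. M = mscale (c 0) (mat 1) + mscale (c 1) P} \<subseteq> S" using S by blast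
  qed
  have I: "\<forall>k<length [mat 1, P]. c k = 0" if "mscale (c 0) (mat 1) + mscale (c 1) P = 0" for c :: "nat \<Rightarrow> 'a"
  proof -
    have "c 0 = 0 \<and> c 1 = 0" using ind that by blast
    then show ?thesis by (auto simp: less_Suc_eq)
  qed
  show ?thesis unfolding is_basis_of_def s using S2 I by blast
qed

lemma trivial_mat:
  fixes X :: "'a::field^'n::finite^'n"
  assumes all: "\<And>i::'n. i = z"
  shows "X = mscale (X $ z $ z) (mat 1)"
proof -
  have "X $ i $ j = mscale (X $ z $ z) (mat 1) $ i $ j" for i j
  proof -
    have ij: "i = z" "j = z" by (rule all)+
    show ?thesis unfolding ij by (simp add: mscale_def mat_def)
  qed
  then show ?thesis unfolding vec_eq_iff by blast
qed

lemma trivial_case: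
  fixes A B C :: "'a::field^'n::finite^'n"
  assumes "CARD('n) = 1"
  shows "is_basis_of [mat 1] (idem_centralizers A B C)"
proof -
  obtain z :: 'n where z: "UNIV = {z}" using assms card_1_singletonE by blast
  have all: "(i::'n) = z" for i using z by auto
  have comm: "X ** Y = Y ** X" for X Y :: "'a^'n^'n"
  proof -
    have "(X ** Y) $ i $ j = (Y ** X) $ i $ j" for i j
    proof -
      have ij: "i = z" "j = z" by (rule all)+
      show ?thesis unfolding ij by (simp add: matrix_matrix_mult_def z mult.commute)
    qed
    then show ?thesis unfolding vec_eq_iff by blast
  qed
  have "X = mscale (X $ z $ z) (mat 1)" for X :: "'a^'n^'n"
    by (rule trivial_mat) (rule all)
  then have "idem_centralizers A B C = range (\<lambda>c. mscale c (mat 1))"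
    unfolding idem_centralizers_def using comm by auto
  then show ?thesis by (rule basis1_lemma)
qed

locale triple =
  fixes A B C :: "'a::field ^ 'n::finite ^ 'n"
  assumes trip: "LR_triple A B C" and two: "2 \<le> CARD('n)"
begin

sublocale V: LRp "LR_decomp A B" A B using trip LR_decomp_LRp by (auto simp: LR_triple_def)
sublocale W: LRp "LR_decomp B C" B C using trip LR_decomp_LRp by (auto simp: LR_triple_def)
sublocale U: LRp "LR_decomp C A" C A using trip LR_decomp_LRp by (auto simp: LR_triple_def)

lemma VW: "LR_decomp A B ! (CARD('n)-1) = LR_decomp B C ! 0"
  using V.kerY W.kerX by simp

lemma v_ex: "\<exists>v. v \<noteq> 0 \<and> v \<in> LR_decomp A B ! (CARD('n)-1)"
  using V.nonzero_ex[of "CARD('n)-1"] by auto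

definition v where "v = (SOME v. v \<noteq> 0 \<and> v \<in> LR_decomp A B ! (CARD('n)-1))"

lemma v: "v \<noteq> 0" "v \<in> LR_decomp A B ! (CARD('n)-1)" "v \<in> LR_decomp B C ! 0"
  using someI_ex[OF v_ex] VW unfolding v_def by auto

lemma Cv_W1: "C *v v \<in> LR_decomp B C ! 1"
  using W.rai_in[of 0, OF _ v(3)] two by simp

lemma BBCv: "B *v (B *v (C *v v)) = 0"
proof -
  have "B *v (C *v v) \<in> LR_decomp B C ! 0" using W.low_in[of 1, OF _ _ Cv_W1] two by simp
  then show ?thesis using V.raiN VW by simp
qed

lemma Cv_low: assumes "i + 2 < CARD('n)" shows "V.E i *v (C *v v) = 0"
proof (rule ccontr)
  assume ne: "V.E i *v (C *v v) \<noteq> 0"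
  have i: "i < CARD('n)" "i+1 < CARD('n)" using assms by auto
  have in1: "V.E i *v (C *v v) \<in> LR_decomp A B ! i" using V.E_in[OF i(1)] .
  have ne1: "B *v (V.E i *v (C *v v)) \<noteq> 0" using V.rai_inj[OF i(2) in1 ne] .
  have in2: "B *v (V.E i *v (C *v v)) \<in> LR_decomp A B ! (i+1)" using V.rai_in[OF i(2) in1] .
  have ne2: "B *v (B *v (V.E i *v (C *v v))) \<noteq> 0" using V.rai_inj[OF _ in2 ne1] assms by simp
  have "V.E (i+2) *v (B *v (B *v (C *v v))) = B *v (V.E (i+1) *v (B *v (C *v v)))"
    using V.comm_rai[of "i+1"] assms by simp
  also have "\<dots> = B *v (B *v (V.E i *v (C *v v)))" using V.comm_rai[OF i(2)] by simp
  finally show False using ne2 BBCv by simp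
qed

lemma Cv_decomp: "C *v v = V.E (CARD('n)-2) *v (C *v v) + V.E (CARD('n)-1) *v (C *v v)"
proof -
  have "C *v v = (\<Sum>i<CARD('n). V.E i *v (C *v v))" by (rule V.E_sum)
  also have "\<dots> = (\<Sum>i\<in>{CARD('n)-2, CARD('n)-1}. V.E i *v (C *v v))"
    by (rule sum.mono_neutral_right) (use two in \<open>auto intro!: Cv_low\<close>)
  also have "\<dots> = V.E (CARD('n)-2) *v (C *v v) + V.E (CARD('n)-1) *v (C *v v)"
    using two by simp
  finally show ?thesis .
qed

lemma ab_ex: "\<exists>a b. V.E (CARD('n)-1) *v (C *v v) = a *s v \<and> C *v v = a *s v + b *s (A *v v)"
proof -
  obtain a where a: "V.E (CARD('n)-1) *v (C *v v) = a *s v"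
    using V.span1[OF _ v(2) v(1) V.E_in] two by fastforce
  have "V.E (CARD('n)-2) *v (C *v v) \<in> (\<lambda>x. A *v x) ` (LR_decomp A B ! (CARD('n)-1))"
    using V.low_img[of "CARD('n)-1"] V.E_in[of "CARD('n)-2"] two
    by (simp add: numeral_2_eq_2 Suc_diff_Suc)
  then obtain y where y: "y \<in> LR_decomp A B ! (CARD('n)-1)" "V.E (CARD('n)-2) *v (C *v v) = A *v y"
    by auto
  obtain b where "y = b *s v" using V.span1[OF _ v(2) v(1) y(1)] two by fastforce
  then have "V.E (CARD('n)-2) *v (C *v v) = b *s (A *v v)" using y(2) by (simp add: vector_scalar_commute)
  then show ?thesis using a Cv_decomp by (metis add.commute)
qed

definition a where "a = (SOME a. \<exists>b. V.E (CARD('n)-1) *v (C *v v) = a *s v \<and> C *v v = a *s v + b *s (A *v v))"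
definition b where "b = (SOME b. V.E (CARD('n)-1) *v (C *v v) = a *s v \<and> C *v v = a *s v + b *s (A *v v))"

lemma ab: "V.E (CARD('n)-1) *v (C *v v) = a *s v" "C *v v = a *s v + b *s (A *v v)"
proof -
  have "\<exists>b. V.E (CARD('n)-1) *v (C *v v) = a *s v \<and> C *v v = a *s v + b *s (A *v v)"
    unfolding a_def using someI_ex[OF ab_ex] .
  then have "V.E (CARD('n)-1) *v (C *v v) = a *s v \<and> C *v v = a *s v + b *s (A *v v)"
    unfolding b_def by (rule someI_ex)
  then show "V.E (CARD('n)-1) *v (C *v v) = a *s v" "C *v v = a *s v + b *s (A *v v)" by auto
qed

lemma UE0v: "U.E 0 *v v \<noteq> 0"
proof
  assume z: "U.E 0 *v v = 0"
  have "\<forall>j. \<exists>x. 1 \<le> j \<and> j < CARD('n) \<longrightarrow> U.E j *v v = A *v x"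
  proof (intro allI impI)
    fix j
    show "\<exists>x. 1 \<le> j \<and> j < CARD('n) \<longrightarrow> U.E j *v v = A *v x"
    proof (cases "1 \<le> j \<and> j < CARD('n)")
      case True
      then have "U.E j *v v \<in> (\<lambda>x. A *v x) ` (LR_decomp C A ! (j-1))"
        using U.rai_img[of "j-1"] U.E_in[of j v] by simp
      then show ?thesis by auto
    qed auto
  qed
  then obtain w where w: "\<And>j. 1 \<le> j \<Longrightarrow> j < CARD('n) \<Longrightarrow> U.E j *v v = A *v w j" by metis
  let ?w = "\<lambda>j. if j = 0 then 0 else w j"
  have "v = (\<Sum>j<CARD('n). U.E j *v v)" by (rule U.E_sum)
  also have "\<dots> = (\<Sum>j<CARD('n). A *v ?w j)"
    by (rule sum.cong) (auto simp: z w)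
  also have "\<dots> = A *v (\<Sum>j<CARD('n). ?w j)" by (rule vec.sum[symmetric])
  finally have "V.E (CARD('n)-1) *v v = 0" using V.comm_lowN by metis
  moreover have "V.E (CARD('n)-1) *v v = v" using V.E_id[OF _ v(2)] two by simp
  ultimately show False using v(1) by simp
qed

lemma rec0: "C *v (U.E 1 *v v) = a *s (U.E 0 *v v)"
proof -
  have "C *v (U.E 1 *v v) = U.E 0 *v (C *v v)" using U.comm_low[of 0 v] two by simp
  also have "\<dots> = a *s (U.E 0 *v v) + b *s (U.E 0 *v (A *v v))"
    by (subst ab(2)) (simp add: matrix_vector_right_distrib vector_scalar_commute)
  finally show ?thesis using U.comm_rai0 by simp
qed

lemma reck: assumes "1 \<le> k" "k + 1 < CARD('n)"
  shows "C *v (U.E (k+1) *v v) = a *s (U.E k *v v) + b *s (A *v (U.E (k-1) *v v))"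
proof -
  have "C *v (U.E (k+1) *v v) = U.E k *v (C *v v)" using U.comm_low[of k v] assms by simp
  also have "\<dots> = a *s (U.E k *v v) + b *s (U.E k *v (A *v v))"
    by (subst ab(2)) (simp add: matrix_vector_right_distrib vector_scalar_commute)
  finally show ?thesis using U.comm_rai[of "k-1" v] assms by simp
qed


lemma cent_iff: "X \<in> idem_centralizers A B C \<longleftrightarrow>
   (\<forall>i<CARD('n). X ** V.E i = V.E i ** X \<and> X ** W.E i = W.E i ** X \<and> X ** U.E i = U.E i ** X)"
proof -
  have "\<And>i. i \<le> CARD('n) - 1 \<longleftrightarrow> i < CARD('n)" using two by auto
  then show ?thesis unfolding idem_centralizers_def V.E_def W.E_def U.E_def by auto
qed

lemma xV_ex: assumes "X \<in> idem_centralizers A B C"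
  shows "\<exists>xV. \<forall>i<CARD('n). \<forall>u\<in>LR_decomp A B ! i. X *v u = xV i *s u"
proof -
  have "\<forall>i. \<exists>s. i < CARD('n) \<longrightarrow> (\<forall>u\<in>LR_decomp A B ! i. X *v u = s *s u)"
    using V.scalar_ex assms unfolding cent_iff by blast
  then show ?thesis by metis
qed

lemma xU_ex: assumes "X \<in> idem_centralizers A B C"
  shows "\<exists>xU. \<forall>i<CARD('n). \<forall>u\<in>LR_decomp C A ! i. X *v u = xU i *s u"
proof -
  have "\<forall>i. \<exists>s. i < CARD('n) \<longrightarrow> (\<forall>u\<in>LR_decomp C A ! i. X *v u = s *s u)"
    using U.scalar_ex assms unfolding cent_iff by blast
  then show ?thesis by metis
qed

lemma rel:
  assumes X: "X \<in> idem_centralizers A B C"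
    and xV: "\<forall>i<CARD('n). \<forall>u\<in>LR_decomp A B ! i. X *v u = xV i *s u"
    and xU: "\<forall>i<CARD('n). \<forall>u\<in>LR_decomp C A ! i. X *v u = xU i *s u"
    and ij: "i < CARD('n)" "j < CARD('n)" and u: "u \<in> LR_decomp A B ! i" and ne: "U.E j *v u \<noteq> 0"
  shows "xV i = xU j"
proof -
  have c: "X ** U.E j = U.E j ** X" using X ij unfolding cent_iff by blast
  have "X *v (U.E j *v u) = xU j *s (U.E j *v u)" using xU ij U.E_in by blast
  moreover have "X *v (U.E j *v u) = U.E j *v (X *v u)" by (simp add: matrix_vector_mul_assoc c)
  moreover have "\<dots> = xV i *s (U.E j *v u)" using xV ij u by (simp add: vector_scalar_commute)
  ultimately have "(xV i - xU j) *s (U.E j *v u) = 0" by (simp add: vector_sub_rdistrib)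
  then show ?thesis using ne by simp
qed

lemma UE1v: "a \<noteq> 0 \<Longrightarrow> U.E 1 *v v \<noteq> 0"
  using rec0 UE0v by auto

lemma chain1: assumes "a \<noteq> 0" shows "k < CARD('n) \<Longrightarrow>
   \<exists>u\<in>LR_decomp A B ! (CARD('n)-1-k). U.E k *v u \<noteq> 0 \<and> (k+1 < CARD('n) \<longrightarrow> U.E (k+1) *v u \<noteq> 0)"
proof (induction k)
  case 0 show ?case using v(2) UE0v UE1v[OF assms] by (intro bexI[of _ v]) simp_all
next
  case (Suc k)
  then obtain u where u: "u \<in> LR_decomp A B ! (CARD('n)-1-k)" "U.E k *v u \<noteq> 0"
      "k+1 < CARD('n) \<longrightarrow> U.E (k+1) *v u \<noteq> 0" by auto
  have h1: "1 \<le> CARD('n)-1-k" "CARD('n)-1-k < CARD('n)" using Suc.prems by auto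
  have Au: "A *v u \<in> LR_decomp A B ! (CARD('n)-1-Suc k)"
  proof -
    have "CARD('n)-1-k-1 = CARD('n)-1-Suc k" by simp
    then show ?thesis using V.low_in[OF h1 u(1)] by simp
  qed
  have e1: "U.E (k+1) *v (A *v u) = A *v (U.E k *v u)" using U.comm_rai Suc.prems by simp
  have n1: "A *v (U.E k *v u) \<noteq> 0" using U.rai_inj[OF _ U.E_in u(2)] Suc.prems by simp
  have n2: "U.E (k+2) *v (A *v u) \<noteq> 0" if "k+2 < CARD('n)"
  proof -
    have "U.E (k+2) *v (A *v u) = A *v (U.E (k+1) *v u)" using U.comm_rai[of "k+1"] that by simp
    moreover have "A *v (U.E (k+1) *v u) \<noteq> 0" using U.rai_inj[OF _ U.E_in] u(3) that by simp
    ultimately show ?thesis by simp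
  qed
  have "U.E (Suc k) *v (A *v u) \<noteq> 0" using e1 n1 by simp
  moreover have "Suc k + 1 < CARD('n) \<longrightarrow> U.E (Suc k + 1) *v (A *v u) \<noteq> 0"
    using n2 by (simp add: numeral_2_eq_2)
  ultimately show ?case using Au by blast
qed

lemma cent_scalar: assumes "a \<noteq> 0" "X \<in> idem_centralizers A B C"
  shows "\<exists>c. X = mscale c (mat 1)"
proof -
  obtain xV where xV: "\<forall>i<CARD('n). \<forall>u\<in>LR_decomp A B ! i. X *v u = xV i *s u"
    using xV_ex[OF assms(2)] by blast
  obtain xU where xU: "\<forall>i<CARD('n). \<forall>u\<in>LR_decomp C A ! i. X *v u = xU i *s u"
    using xU_ex[OF assms(2)] by blast
  have r: "xV (CARD('n)-1-k) = xU k \<and> (k+1 < CARD('n) \<longrightarrow> xV (CARD('n)-1-k) = xU (k+1))"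
    if k: "k < CARD('n)" for k
  proof -
    obtain u where u: "u \<in> LR_decomp A B ! (CARD('n)-1-k)" "U.E k *v u \<noteq> 0"
      "k+1 < CARD('n) \<longrightarrow> U.E (k+1) *v u \<noteq> 0" using chain1[OF assms(1) k] by blast
    have i: "CARD('n)-1-k < CARD('n)" using k by simp
    show ?thesis using rel[OF assms(2) xV xU i k u(1) u(2)] rel[OF assms(2) xV xU i _ u(1)] u(3) by blast
  qed
  have u0: "xU k = xU 0" if "k < CARD('n)" for k
    using that
  proof (induction k)
    case (Suc k)
    then have k: "k < CARD('n)" "k+1 < CARD('n)" by auto
    then have "xU (k+1) = xU k" using r[of k] by auto
    then show ?case using Suc k by simp
  qed simp
  have "xV i = xU 0" if "i < CARD('n)" for i
    using r[of "CARD('n)-1-i"] u0[of "CARD('n)-1-i"] that by simp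
  then have "X = mscale (xU 0) (mat 1)"
    by (intro V.ext_matrix) (simp add: xV mscale_mv)
  then show ?thesis by blast
qed

lemma b_ne: assumes "a = 0" shows "b \<noteq> 0"
proof
  assume "b = 0"
  then have "C *v v = 0" using ab(2) assms by simp
  moreover have "C *v v \<noteq> 0" using W.rai_inj[of 0, OF _ v(3) v(1)] two by simp
  ultimately show False by simp
qed

lemma UE1v0: assumes "a = 0" shows "U.E 1 *v v = 0"
proof (rule ccontr)
  assume "U.E 1 *v v \<noteq> 0"
  then have "C *v (U.E 1 *v v) \<noteq> 0" using U.low_inj[of 1, OF _ _ U.E_in] two by simp
  then show False using rec0 assms by simp
qed

lemma odd0: assumes "a = 0" shows "2*m+1 < CARD('n) \<Longrightarrow> U.E (2*m+1) *v v = 0"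
proof (induction m)
  case 0 then show ?case using UE1v0[OF assms] by simp
next
  case (Suc m)
  have "C *v (U.E (2*m+2+1) *v v) = a *s (U.E (2*m+2) *v v) + b *s (A *v (U.E (2*m+2-1) *v v))"
    using reck[of "2*m+2"] Suc.prems by simp
  also have "\<dots> = 0" using Suc assms by simp
  finally have z: "C *v (U.E (2*m+3) *v v) = 0" by (simp add: numeral_3_eq_3)
  show ?case
  proof (rule ccontr)
    assume "U.E (2 * Suc m + 1) *v v \<noteq> 0"
    then have "C *v (U.E (2*m+3) *v v) \<noteq> 0"
      using U.low_inj[of "2*m+3", OF _ _ U.E_in] Suc.prems by (simp add: numeral_3_eq_3)
    then show False using z by simp
  qed
qed

lemma UE2v: assumes "a = 0" "2 < CARD('n)" shows "U.E 2 *v v \<noteq> 0"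
proof -
  have "C *v (U.E (1+1) *v v) = a *s (U.E 1 *v v) + b *s (A *v (U.E (1-1) *v v))"
    using reck[of 1] assms by simp
  then have e: "C *v (U.E 2 *v v) = b *s (A *v (U.E 0 *v v))" using assms by (simp add: numeral_2_eq_2)
  have "A *v (U.E 0 *v v) \<noteq> 0" using U.rai_inj[of 0, OF _ U.E_in UE0v] assms by simp
  then have "C *v (U.E 2 *v v) \<noteq> 0" using e b_ne[OF assms(1)] by simp
  then show ?thesis by auto
qed

lemma chain2: assumes "a = 0" shows "k < CARD('n) \<Longrightarrow>
   \<exists>u\<in>LR_decomp A B ! (CARD('n)-1-k). U.E k *v u \<noteq> 0 \<and> (k+2 < CARD('n) \<longrightarrow> U.E (k+2) *v u \<noteq> 0)"
proof (induction k)
  case 0 show ?case using v(2) UE0v UE2v[OF assms] by (intro bexI[of _ v]) (simp_all add: numeral_2_eq_2)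
next
  case (Suc k)
  then obtain u where u: "u \<in> LR_decomp A B ! (CARD('n)-1-k)" "U.E k *v u \<noteq> 0"
      "k+2 < CARD('n) \<longrightarrow> U.E (k+2) *v u \<noteq> 0" by auto
  have h1: "1 \<le> CARD('n)-1-k" "CARD('n)-1-k < CARD('n)" using Suc.prems by auto
  have Au: "A *v u \<in> LR_decomp A B ! (CARD('n)-1-Suc k)"
  proof -
    have "CARD('n)-1-k-1 = CARD('n)-1-Suc k" by simp
    then show ?thesis using V.low_in[OF h1 u(1)] by simp
  qed
  have e1: "U.E (k+1) *v (A *v u) = A *v (U.E k *v u)" using U.comm_rai Suc.prems by simp
  have n1: "A *v (U.E k *v u) \<noteq> 0" using U.rai_inj[OF _ U.E_in u(2)] Suc.prems by simp
  have n2: "U.E (k+3) *v (A *v u) \<noteq> 0" if "k+3 < CARD('n)"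
  proof -
    have "U.E (k+2+1) *v (A *v u) = A *v (U.E (k+2) *v u)" using U.comm_rai[of "k+2"] that by simp
    moreover have "A *v (U.E (k+2) *v u) \<noteq> 0" using U.rai_inj[OF _ U.E_in] u(3) that by simp
    ultimately show ?thesis by (simp add: numeral_3_eq_3)
  qed
  have "U.E (Suc k) *v (A *v u) \<noteq> 0" using e1 n1 by simp
  moreover have "Suc k + 2 < CARD('n) \<longrightarrow> U.E (Suc k + 2) *v (A *v u) \<noteq> 0"
    using n2 by (simp add: numeral_3_eq_3 numeral_2_eq_2)
  ultimately show ?case using Au by blast
qed

definition J where "J = (\<Sum>j \<le> (CARD('n) - 1) div 2. V.E (2 * j))"

lemma J_V: assumes "i < CARD('n)" "u \<in> LR_decomp A B ! i"
  shows "J *v u = (if even i then u else 0)"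
proof -
  have "J *v u = (\<Sum>j \<le> (CARD('n) - 1) div 2. V.E (2 * j) *v u)" unfolding J_def by (simp add: sum_mv)
  also have "\<dots> = (\<Sum>j \<le> (CARD('n) - 1) div 2. if j = i div 2 then (if even i then u else 0) else 0)"
  proof (rule sum.cong)
    fix j assume "j \<in> {..(CARD('n) - 1) div 2}"
    then have "2 * j < CARD('n)" using two by auto
    then show "V.E (2 * j) *v u = (if j = i div 2 then (if even i then u else 0) else 0)"
      using V.E_on[OF assms, of "2*j"] by auto
  qed simp
  also have "\<dots> = (if even i then u else 0)"
  proof -
    have "i div 2 \<le> (CARD('n) - 1) div 2" using assms(1) by (simp add: div_le_mono)
    then show ?thesis by (simp add: sum.delta)
  qed
  finally show ?thesis .
qed

lemma cent_two: assumes "a = 0" "X \<in> idem_centralizers A B C"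
  shows "\<exists>c0 c1. X = mscale c0 (mat 1) + mscale c1 J"
proof -
  obtain xV where xV: "\<forall>i<CARD('n). \<forall>u\<in>LR_decomp A B ! i. X *v u = xV i *s u"
    using xV_ex[OF assms(2)] by blast
  obtain xU where xU: "\<forall>i<CARD('n). \<forall>u\<in>LR_decomp C A ! i. X *v u = xU i *s u"
    using xU_ex[OF assms(2)] by blast
  have r: "xV (CARD('n)-1-k) = xU k \<and> (k+2 < CARD('n) \<longrightarrow> xV (CARD('n)-1-k) = xU (k+2))"
    if k: "k < CARD('n)" for k
  proof -
    obtain u where u: "u \<in> LR_decomp A B ! (CARD('n)-1-k)" "U.E k *v u \<noteq> 0"
      "k+2 < CARD('n) \<longrightarrow> U.E (k+2) *v u \<noteq> 0" using chain2[OF assms(1) k] by blast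
    have i: "CARD('n)-1-k < CARD('n)" using k by simp
    show ?thesis using rel[OF assms(2) xV xU i k u(1) u(2)] rel[OF assms(2) xV xU i _ u(1)] u(3) by blast
  qed
  have s2: "xV (i+2) = xV i" if "i + 2 < CARD('n)" for i
  proof -
    define k where "k = CARD('n) - 3 - i"
    have k1: "CARD('n)-1-k = i+2" "k + 2 < CARD('n)" "k < CARD('n)" "CARD('n)-1-(k+2) = i"
      using that unfolding k_def by auto
    have "xV (CARD('n)-1-k) = xU (k+2)" using r[OF k1(3)] k1(2) by blast
    then have 1: "xV (i+2) = xU (k+2)" using k1(1) by simp
    have "xV (CARD('n)-1-(k+2)) = xU (k+2)" using r[OF k1(2)] by blast
    then have 2: "xV i = xU (k+2)" using k1(4) by simp
    show ?thesis using 1 2 by simp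
  qed
  have par: "xV (2*m + r) = xV r" if "2*m + r < CARD('n)" for m r
    using that
  proof (induction m)
    case (Suc m) then show ?case using s2[of "2*m+r"] by (simp add: algebra_simps)
  qed simp
  have "X = mscale (xV 1) (mat 1) + mscale (xV 0 - xV 1) J"
  proof (rule V.ext_matrix)
    fix i u assume iu: "i < CARD('n)" "u \<in> LR_decomp A B ! i"
    have p: "xV i = xV (i mod 2)"
      using par[of "i div 2" "i mod 2"] iu(1) by (simp only: mult_div_mod_eq)
    have Xu: "X *v u = xV i *s u" using xV iu by blast
    show "X *v u = (mscale (xV 1) (mat 1) + mscale (xV 0 - xV 1) J) *v u"
    proof (cases "even i")
      case True
      then have "i mod 2 = 0" by presburger
      then show ?thesis using Xu p J_V[OF iu] True
        by (simp add: matrix_vector_mult_add_rdistrib mscale_mv vector_sub_rdistrib)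
    next
      case False
      then have "i mod 2 = 1" by presburger
      then show ?thesis using Xu p J_V[OF iu] False
        by (simp add: matrix_vector_mult_add_rdistrib mscale_mv)
    qed
  qed
  then show ?thesis by blast
qed


definition Par :: "nat \<Rightarrow> ('a^'n) set" where
  "Par e = {u. \<forall>j<CARD('n). odd (j + e) \<longrightarrow> U.E j *v u = 0}"

lemma Par_scale: "u \<in> Par e \<Longrightarrow> c *s u \<in> Par e"
  by (simp add: Par_def vector_scalar_commute)

lemma v_Par: assumes "a = 0" shows "v \<in> Par 0"
  unfolding Par_def
proof (intro CollectI allI impI)
  fix j assume j: "j < CARD('n)" "odd (j + 0)"
  then obtain m where "j = 2*m+1" by (auto elim: oddE)
  then show "U.E j *v v = 0" using odd0[OF assms] j by simp
qed

lemma A_Par: assumes "u \<in> Par e" shows "A *v u \<in> Par (Suc e)"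
  unfolding Par_def
proof (intro CollectI allI impI)
  fix j assume j: "j < CARD('n)" "odd (j + Suc e)"
  show "U.E j *v (A *v u) = 0"
  proof (cases j)
    case 0 then show ?thesis using U.comm_rai0 by simp
  next
    case (Suc j')
    then have "U.E j *v (A *v u) = A *v (U.E j' *v u)" using U.comm_rai[of j'] j by simp
    moreover have "U.E j' *v u = 0" using assms j Suc unfolding Par_def by auto
    ultimately show ?thesis by simp
  qed
qed

lemma C_Par: assumes "u \<in> Par e" shows "C *v u \<in> Par (Suc e)"
  unfolding Par_def
proof (intro CollectI allI impI)
  fix j assume j: "j < CARD('n)" "odd (j + Suc e)"
  show "U.E j *v (C *v u) = 0"
  proof (cases "j + 1 < CARD('n)")
    case False
    then have "j = CARD('n) - 1" using j by simp
    then show ?thesis using U.comm_lowN by simp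
  next
    case True
    then have "U.E j *v (C *v u) = C *v (U.E (j+1) *v u)" using U.comm_low by simp
    moreover have "U.E (j+1) *v u = 0" using assms j True unfolding Par_def by auto
    ultimately show ?thesis by simp
  qed
qed

lemma V_Par: assumes "a = 0" shows "k < CARD('n) \<Longrightarrow> LR_decomp A B ! (CARD('n)-1-k) \<subseteq> Par k"
proof (induction k)
  case 0
  show ?case
  proof
    fix u assume "u \<in> LR_decomp A B ! (CARD('n)-1-0)"
    then obtain c where "u = c *s v" using V.span1[OF _ v(2) v(1)] two by fastforce
    then show "u \<in> Par 0" using Par_scale v_Par[OF assms] by simp
  qed
next
  case (Suc k)
  have h1: "1 \<le> CARD('n)-1-k" "CARD('n)-1-k < CARD('n)" using Suc.prems by auto
  have e: "CARD('n)-1-k-1 = CARD('n)-1-Suc k" by simp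
  have "LR_decomp A B ! (CARD('n)-1-Suc k) = (\<lambda>x. A *v x) ` (LR_decomp A B ! (CARD('n)-1-k))"
    using V.low_img[OF h1] e by simp
  then show ?case using Suc A_Par by auto
qed

lemma V_Par': assumes "a = 0" "i < CARD('n)" "u \<in> LR_decomp A B ! i" shows "u \<in> Par (CARD('n)-1-i)"
  using V_Par[OF assms(1), of "CARD('n)-1-i"] assms(2,3) by auto

lemma W_Par: assumes "a = 0" shows "k < CARD('n) \<Longrightarrow> LR_decomp B C ! k \<subseteq> Par k"
proof (induction k)
  case 0
  then show ?case using V_Par[OF assms, of 0] VW by simp
next
  case (Suc k)
  have "LR_decomp B C ! (Suc k) = (\<lambda>x. C *v x) ` (LR_decomp B C ! k)"
    using W.rai_img[of k] Suc.prems by simp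
  then show ?case using Suc C_Par by auto
qed

lemma U_Par: assumes "j < CARD('n)" "u \<in> LR_decomp C A ! j" shows "u \<in> Par j"
  unfolding Par_def using U.E_on[OF assms] by auto

definition R where "R = (\<Sum>j\<in>{j. j < CARD('n) \<and> even (j + (CARD('n)-1))}. U.E j)"

lemma R_Par: assumes "u \<in> Par e" shows "R *v u = (if even (e + (CARD('n)-1)) then u else 0)"
proof -
  let ?S = "{j. j < CARD('n) \<and> even (j + (CARD('n)-1))}"
  have fin: "finite ?S" by simp
  have z: "U.E j *v u = 0" if "j < CARD('n)" "odd (j + e)" for j
    using assms that unfolding Par_def by auto
  have Ru: "R *v u = (\<Sum>j\<in>?S. U.E j *v u)" unfolding R_def by (rule sum_mv[OF fin])
  show ?thesis
  proof (cases "even (e + (CARD('n)-1))")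
    case True
    have "(\<Sum>j\<in>?S. U.E j *v u) = (\<Sum>j<CARD('n). U.E j *v u)"
    proof (rule sum.mono_neutral_left)
      show "\<forall>i\<in>{..<CARD('n)} - ?S. U.E i *v u = 0"
      proof
        fix i assume "i \<in> {..<CARD('n)} - ?S"
        then have "i < CARD('n)" "odd (i + (CARD('n)-1))" by auto
        moreover have "odd (i + e)" using True \<open>odd (i + (CARD('n)-1))\<close> by presburger
        ultimately show "U.E i *v u = 0" using z by blast
      qed
    qed auto
    then show ?thesis using Ru True U.E_sum[of u] by simp
  next
    case False
    have "(\<Sum>j\<in>?S. U.E j *v u) = 0"
    proof (rule sum.neutral, rule ballI)
      fix i assume "i \<in> ?S"
      then have "i < CARD('n)" "even (i + (CARD('n)-1))" by auto
      moreover have "odd (i + e)" using False \<open>even (i + (CARD('n)-1))\<close> by presburger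
      ultimately show "U.E i *v u = 0" using z by blast
    qed
    then show ?thesis using Ru False by simp
  qed
qed

lemma J_eq_R: assumes "a = 0" shows "J = R"
proof (rule V.ext_matrix)
  fix i u assume iu: "i < CARD('n)" "u \<in> LR_decomp A B ! i"
  have "even (CARD('n)-1-i + (CARD('n)-1)) \<longleftrightarrow> even i" using iu(1) by presburger
  then show "J *v u = R *v u" using J_V[OF iu] R_Par[OF V_Par'[OF assms iu]] by simp
qed

lemma J_W: assumes "a = 0" "i < CARD('n)" "u \<in> LR_decomp B C ! i"
  shows "J *v u = (if even (i + (CARD('n)-1)) then u else 0)"
  using J_eq_R[OF assms(1)] R_Par W_Par[OF assms(1,2)] assms(3) by auto

lemma J_U: assumes "a = 0" "i < CARD('n)" "u \<in> LR_decomp C A ! i"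
  shows "J *v u = (if even (i + (CARD('n)-1)) then u else 0)"
  using J_eq_R[OF assms(1)] R_Par U_Par[OF assms(2,3)] by auto

lemma J_cent: assumes "a = 0" shows "J \<in> idem_centralizers A B C"
  unfolding cent_iff
proof (intro allI impI conjI)
  fix i assume i: "i < CARD('n)"
  show "J ** V.E i = V.E i ** J" using V.indicator[OF J_V i] by simp
  show "J ** W.E i = W.E i ** J" using W.indicator[OF J_W[OF assms] i] by simp
  show "J ** U.E i = U.E i ** J" using U.indicator[OF J_U[OF assms] i] by simp
qed

lemma A_odd: "A ** J = (mat 1 - J) ** A"
proof (rule V.shift_odd[OF J_V])
  fix i u assume iu: "i < CARD('n)" "u \<in> LR_decomp A B ! i"
  show "A *v u = 0 \<or> (\<exists>k<CARD('n). A *v u \<in> LR_decomp A B ! k \<and> (even k \<longleftrightarrow> \<not> even i))"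
  proof (cases i)
    case 0 then show ?thesis using V.low0 iu by simp
  next
    case (Suc i')
    then have "A *v u \<in> LR_decomp A B ! i'" using V.low_in[OF _ iu(1) iu(2)] by simp
    then show ?thesis using Suc iu(1) by (intro disjI2 exI[of _ i']) auto
  qed
qed

lemma B_odd: "B ** J = (mat 1 - J) ** B"
proof (rule V.shift_odd[OF J_V])
  fix i u assume iu: "i < CARD('n)" "u \<in> LR_decomp A B ! i"
  show "B *v u = 0 \<or> (\<exists>k<CARD('n). B *v u \<in> LR_decomp A B ! k \<and> (even k \<longleftrightarrow> \<not> even i))"
  proof (cases "i + 1 < CARD('n)")
    case False
    then have "i = CARD('n) - 1" using iu by simp
    then show ?thesis using V.raiN iu by simp
  next
    case True
    then have "B *v u \<in> LR_decomp A B ! (i+1)" using V.rai_in[OF _ iu(2)] by simp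
    then show ?thesis using True by (intro disjI2 exI[of _ "i+1"]) auto
  qed
qed

lemma C_odd: assumes "a = 0" shows "C ** J = (mat 1 - J) ** C"
proof (rule U.shift_odd[OF J_U[OF assms]])
  fix i u assume iu: "i < CARD('n)" "u \<in> LR_decomp C A ! i"
  show "C *v u = 0 \<or> (\<exists>k<CARD('n). C *v u \<in> LR_decomp C A ! k \<and>
          (even (k + (CARD('n)-1)) \<longleftrightarrow> \<not> even (i + (CARD('n)-1))))"
  proof (cases i)
    case 0 then show ?thesis using U.low0 iu by simp
  next
    case (Suc i')
    then have "C *v u \<in> LR_decomp C A ! i'" using U.low_in[OF _ iu(1) iu(2)] by simp
    moreover have "even (i' + (CARD('n)-1)) \<longleftrightarrow> \<not> even (i + (CARD('n)-1))" using Suc by simp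
    ultimately show ?thesis using Suc iu(1) by (intro disjI2 exI[of _ i']) auto
  qed
qed

lemma a0_bip: assumes "a = 0" shows "bipartite A B C"
  unfolding bipartite_def
proof (intro allI impI conjI)
  fix i assume "i \<le> CARD('n) - 1"
  then have i: "i < CARD('n)" using two by simp
  have JV: "J ** V.E i = V.E i ** J" "J ** V.E i = V.E i \<or> J ** V.E i = 0"
    using V.indicator[OF J_V i] by auto
  have JW: "J ** W.E i = W.E i ** J" "J ** W.E i = W.E i \<or> J ** W.E i = 0"
    using W.indicator[OF J_W[OF assms] i] by auto
  have JU: "J ** U.E i = U.E i ** J" "J ** U.E i = U.E i \<or> J ** U.E i = 0"
    using U.indicator[OF J_U[OF assms] i] by auto
  show "trace (C ** proj (LR_decomp A B) i) = 0"
    using trace_odd[OF C_odd[OF assms] JV] unfolding V.E_def .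
  show "trace (A ** proj (LR_decomp B C) i) = 0"
    using trace_odd[OF A_odd JW] unfolding W.E_def .
  show "trace (B ** proj (LR_decomp C A) i) = 0"
    using trace_odd[OF B_odd JU] unfolding U.E_def .
qed

lemma bip_a0: assumes "bipartite A B C" shows "a = 0"
proof -
  let ?E = "V.E (CARD('n)-1)"
  have n: "CARD('n)-1 < CARD('n)" using two by simp
  have t0: "trace (C ** ?E) = 0" using assms unfolding bipartite_def V.E_def by simp
  have EE: "?E ** ?E = ?E"
    unfolding matrix_eq matrix_vector_mul_assoc[symmetric] using V.E_id[OF n V.E_in[OF n]] by blast
  have ECE: "?E ** (C ** ?E) = mscale a ?E"
  proof (simp only: matrix_eq, rule allI)
    fix x
    obtain c where c: "?E *v x = c *s v" using V.span1[OF n v(2) v(1) V.E_in[OF n]] by blast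
    have Ev: "?E *v v = v" using V.E_id[OF n v(2)] .
    have EAv: "?E *v (A *v v) = 0" using V.comm_lowN .
    have "(?E ** (C ** ?E)) *v x = ?E *v (C *v (c *s v))" by (simp only: matrix_vector_mul_assoc[symmetric] c)
    also have "\<dots> = c *s (?E *v (a *s v + b *s (A *v v)))" by (simp only: vector_scalar_commute ab(2))
    also have "\<dots> = c *s (a *s v)" by (simp only: matrix_vector_right_distrib vector_scalar_commute Ev EAv) simp
    also have "\<dots> = mscale a ?E *v x" by (simp only: mscale_mv c vector_smult_assoc mult.commute)
    finally show "(?E ** (C ** ?E)) *v x = mscale a ?E *v x" .
  qed
  have "trace (C ** ?E) = trace (C ** (?E ** ?E))" using EE by simp
  also have "\<dots> = trace ((C ** ?E) ** ?E)" by (simp only: matrix_mul_assoc)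
  also have "\<dots> = trace (?E ** (C ** ?E))" by (rule trace_mul_sym)
  also have "\<dots> = a * trace ?E" unfolding ECE by (simp add: trace_def mscale_def sum_distrib_left)
  also have "\<dots> = a" using V.trace_E[OF n] by simp
  finally show ?thesis using t0 by simp
qed


lemma cent_lin: assumes "X \<in> idem_centralizers A B C" "Y \<in> idem_centralizers A B C"
  shows "mscale c0 X + mscale c1 Y \<in> idem_centralizers A B C"
  using assms unfolding cent_iff by (auto intro!: comm_add comm_mscale)

lemma I_cent: "mat 1 \<in> idem_centralizers A B C"
  unfolding cent_iff by simp

lemma res_nonbip: assumes "a \<noteq> 0" shows "idem_centralizers A B C = range (\<lambda>c. mscale c (mat 1))"
proof
  show "idem_centralizers A B C \<subseteq> range (\<lambda>c. mscale c (mat 1))" using cent_scalar[OF assms] by blast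
  show "range (\<lambda>c. mscale c (mat 1)) \<subseteq> idem_centralizers A B C"
  proof
    fix M assume "M \<in> range (\<lambda>c. mscale c (mat 1 :: 'a^'n^'n))"
    then obtain c where M0: "M = mscale c (mat 1)" by auto
    have "mscale 0 (mat 1 :: 'a^'n^'n) = 0" by (simp add: mscale_def vec_eq_iff)
    then have M: "M = mscale c (mat 1) + mscale 0 (mat 1)" using M0 by simp
    show "M \<in> idem_centralizers A B C" unfolding M by (rule cent_lin[OF I_cent I_cent])
  qed
qed

lemma res_bip: assumes "a = 0"
  shows "idem_centralizers A B C = {mscale c0 (mat 1) + mscale c1 J | c0 c1. True}"
proof
  show "idem_centralizers A B C \<subseteq> {mscale c0 (mat 1) + mscale c1 J | c0 c1. True}"
    using cent_two[OF assms] by blast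
  show "{mscale c0 (mat 1) + mscale c1 J | c0 c1. True} \<subseteq> idem_centralizers A B C"
    using cent_lin[OF I_cent J_cent[OF assms]] by blast
qed

lemma J_indep: assumes "mscale c0 (mat 1) + mscale c1 J = 0" shows "c0 = 0 \<and> c1 = 0"
proof -
  obtain g0 where g0: "g0 \<in> LR_decomp A B ! 0" "g0 \<noteq> 0" using V.nonzero_ex[of 0] two by auto
  obtain g1 where g1: "g1 \<in> LR_decomp A B ! 1" "g1 \<noteq> 0" using V.nonzero_ex[of 1] two by auto
  have "(mscale c0 (mat 1) + mscale c1 J) *v g0 = (c0 + c1) *s g0"
    using J_V[of 0 g0] g0 two by (simp add: matrix_vector_mult_add_rdistrib mscale_mv vector_sadd_rdistrib)
  then have "(c0 + c1) *s g0 = 0" using assms by simp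
  then have 1: "c0 + c1 = 0" using g0(2) vector_mul_eq_0 by blast
  have "(mscale c0 (mat 1) + mscale c1 J) *v g1 = c0 *s g1"
    using J_V[of 1 g1] g1 two by (simp add: matrix_vector_mult_add_rdistrib mscale_mv)
  then have "c0 *s g1 = 0" using assms by simp
  then have 2: "c0 = 0" using g1(2) vector_mul_eq_0 by blast
  show ?thesis using 1 2 by simp
qed

lemma J_proj: "J = (\<Sum>j \<le> (CARD('n) - 1) div 2. proj (LR_decomp A B) (2 * j))"
  unfolding J_def V.E_def ..

end


theorem proposition19p5:
  fixes A B C :: "'a::field ^ 'n::finite ^ 'n"
  assumes "LR_triple A B C"
  shows "(CARD('n) - 1 = 0 \<longrightarrow> is_basis_of [mat 1] (idem_centralizers A B C))
       \<and> (\<not> bipartite A B C \<longrightarrow> is_basis_of [mat 1] (idem_centralizers A B C))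
       \<and> (bipartite A B C \<and> CARD('n) - 1 \<noteq> 0 \<longrightarrow>
            is_basis_of [mat 1, (\<Sum>j \<le> (CARD('n) - 1) div 2. proj (LR_decomp A B) (2 * j))]
                        (idem_centralizers A B C))"
proof (cases "CARD('n) - 1 = 0")
  case True
  have "0 < CARD('n)" by (rule finite_UNIV_card_ge_0) simp
  then have "CARD('n) = 1" using True by linarith
  then have "is_basis_of [mat 1] (idem_centralizers A B C)" by (rule trivial_case)
  then show ?thesis using True by simp
next
  case False
  then have two: "2 \<le> CARD('n)" by simp
  interpret T: triple A B C by unfold_locales (use assms two in auto)
  show ?thesis
  proof (cases "T.a = 0")
    case True
    have bip: "bipartite A B C" by (rule T.a0_bip[OF True])
    have "is_basis_of [mat 1, T.J] (idem_centralizers A B C)"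
      by (rule basis2_lemma[OF T.res_bip[OF True] T.J_indep])
    then show ?thesis using bip False T.J_proj by simp
  next
    case False2: False
    have nb: "\<not> bipartite A B C" using T.bip_a0 False2 by blast
    have "is_basis_of [mat 1] (idem_centralizers A B C)"
      by (rule basis1_lemma[OF T.res_nonbip[OF False2]])
    then show ?thesis using nb False by simp
  qed
qed

end
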